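(* Let $\mathcal{M}\subseteq\mathbb{S}^n$. Then $\mathcal{S}(\mathcal{M})$ is rank-one generated if and only if for every nonzero $X\in\mathcal{S}(\mathcal{M})$ we have $\mathrm{range}(X)\cap\mathcal{E}(X,\mathcal{M})\neq\{0\}$.
   Context: $\mathbb{S}^n$ denotes real symmetric $n\times n$ matrices with $\langle A,B\rangle=\mathrm{tr}(AB)$, $\mathbb{S}^n_+$ the PSD cone. For $\mathcal{M}\subseteq\mathbb{S}^n$, $\mathcal{S}(\mathcal{M})=\{X\in\mathbb{S}^n_+:\langle M,X\rangle\ge0\ \forall M\in\mathcal{M}\}$, and for $X\in\mathcal{S}(\mathcal{M})$, $\mathcal{E}(X,\mathcal{M})=\{x\in\mathbb{R}^n: |x^\top Mx|\le\langle M,X\rangle\ \forall M\in\mathcal{M}\}$. A closed convex cone $\mathcal{S}\subseteq\mathbb{S}^n_+$ is rank-one generated (ROG) if $\mathcal{S}=\mathrm{conv}(\mathcal{S}\cap\{xx^\top:x\in\mathbb{R}^n\})$. *)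

theory Defs
  imports "HOL-Analysis.Analysis"
begin

text \<open>Real symmetric n x n matrices, n = CARD('n), represented as real^'n^'n.\<close>

definition sym_mat :: "real^'n^'n \<Rightarrow> bool" where
  "sym_mat A \<longleftrightarrow> transpose A = A"

definition frob :: "real^'n^'n \<Rightarrow> real^'n^'n \<Rightarrow> real" where
  "frob A B = trace (A ** B)"

definition psd :: "real^'n^'n \<Rightarrow> bool" where
  "psd X \<longleftrightarrow> sym_mat X \<and> (\<forall>x. x \<bullet> (X *v x) \<ge> 0)"

definition outer :: "real^'n \<Rightarrow> real^'n^'n" where
  "outer x = (\<chi> i j. x $ i * x $ j)"

definition SM :: "(real^'n^'n) set \<Rightarrow> (real^'n^'n) set" where
  "SM \<M> = {X. psd X \<and> (\<forall>M\<in>\<M>. frob M X \<ge> 0)}"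

definition EM :: "real^'n^'n \<Rightarrow> (real^'n^'n) set \<Rightarrow> (real^'n) set" where
  "EM X \<M> = {x. \<forall>M\<in>\<M>. \<bar>x \<bullet> (M *v x)\<bar> \<le> frob M X}"

definition ROG :: "(real^'n^'n) set \<Rightarrow> bool" where
  "ROG S \<longleftrightarrow> closed S \<and> convex_cone S \<and> S \<subseteq> Collect psd \<and>
     S = convex hull (S \<inter> {outer x | x. True})"

end

theory Submission
  imports Defs
begin
lemma dot_mv: "(v::real^'m) \<bullet> (X *v w) = (\<Sum>i\<in>UNIV. \<Sum>j\<in>UNIV. v$i * X$i$j * w$j)"
  by (simp add: inner_vec_def matrix_vector_mult_def sum_distrib_left mult.assoc)

lemma frob_eq: "frob M X = (\<Sum>i\<in>UNIV. \<Sum>j\<in>UNIV. M$i$j * X$j$i)"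
  by (simp add: frob_def trace_def matrix_matrix_mult_def)

lemma frob_outer: "frob M (outer x) = x \<bullet> (M *v x)"
  unfolding frob_eq dot_mv outer_def
  by (simp add: sum_distrib_left mult.assoc mult.commute mult.left_commute)

lemma linear_frob: "linear (frob M)"
  by (rule linearI) (simp_all add: frob_eq algebra_simps sum.distrib sum_distrib_left)

lemma linear_quad: "linear (\<lambda>X::real^'n^'m. v \<bullet> (X *v w))"
  by (rule linearI) (simp_all only: dot_mv, simp_all add: dot_mv algebra_simps sum.distrib sum_distrib_left)

lemma quad_outer: "v \<bullet> (outer x *v v) = (x \<bullet> v)^2"
  unfolding dot_mv unfolding outer_def inner_vec_def power2_eq_square
  by (simp add: sum_product mult.assoc mult.commute mult.left_commute)

lemma trace_eq: "trace X = (\<Sum>i\<in>UNIV. X$i$i)"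
  by (simp add: trace_def)

lemma trace_outer: "trace (outer x) = x \<bullet> x"
  by (simp add: trace_def outer_def inner_vec_def)

lemma linear_trace: "linear (trace :: real^'n^'n \<Rightarrow> real)"
  by (rule linearI) (simp_all add: trace_def sum.distrib sum_distrib_left)

lemma sym_dot: assumes "sym_mat X" shows "v \<bullet> (X *v w) = w \<bullet> (X *v v)"
proof -
  have s: "X$i$j = X$j$i" for i j using assms unfolding sym_mat_def
    by (metis transpose_def vec_lambda_beta)
  show ?thesis unfolding dot_mv
    by (subst sum.swap) (simp add: s mult.commute mult.left_commute)
qed

lemma outer_scale: "outer (c *\<^sub>R x) = (c^2) *\<^sub>R outer x"
  by (simp add: outer_def vec_eq_iff power2_eq_square)

lemma sym_outer: "sym_mat (outer x)"
  by (simp add: sym_mat_def outer_def transpose_def vec_eq_iff mult.commute)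

lemma sym_add: "sym_mat A \<Longrightarrow> sym_mat B \<Longrightarrow> sym_mat (A + B)"
  by (simp add: sym_mat_def transpose_def vec_eq_iff)

lemma sym_scale: "sym_mat A \<Longrightarrow> sym_mat (c *\<^sub>R A)"
  by (simp add: sym_mat_def transpose_def vec_eq_iff)

lemma sym_diff: "sym_mat A \<Longrightarrow> sym_mat B \<Longrightarrow> sym_mat (A - B)"
  by (simp add: sym_mat_def transpose_def vec_eq_iff)

lemma psd_add: "psd A \<Longrightarrow> psd B \<Longrightarrow> psd (A + B)"
  unfolding psd_def by (simp add: sym_add matrix_vector_mult_add_rdistrib inner_add_right add_nonneg_nonneg)

lemma psd_scale: "psd A \<Longrightarrow> 0 \<le> c \<Longrightarrow> psd (c *\<^sub>R A)"
  unfolding psd_def by (simp add: sym_scale scaleR_matrix_vector_assoc[symmetric])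

lemma psd_outer: "psd (outer x)"
  unfolding psd_def by (simp add: sym_outer quad_outer)

lemma psd_zero: "psd (0::real^'n^'n)"
  unfolding psd_def by (simp add: sym_mat_def transpose_def vec_eq_iff)

lemma psd_cs:
  fixes X :: "real^'n^'n"
  assumes "psd X"
  shows "(y \<bullet> (X *v v))^2 \<le> (y \<bullet> (X *v y)) * (v \<bullet> (X *v v))"
proof -
  define a where "a = y \<bullet> (X *v y)"
  define b where "b = y \<bullet> (X *v v)"
  define c where "c = v \<bullet> (X *v v)"
  have sy: "sym_mat X" using assms psd_def by blast
  have q: "0 \<le> a + 2*t*b + t^2 * c" for t
  proof -
    have "0 \<le> (y + t *\<^sub>R v) \<bullet> (X *v (y + t *\<^sub>R v))" using assms psd_def by blast
    also have "\<dots> = a + t * (y \<bullet> (X *v v)) + t * (v \<bullet> (X *v y)) + t^2 * c"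
      by (simp add: a_def c_def matrix_vector_right_distrib inner_add_left inner_add_right
          matrix_vector_mult_scaleR power2_eq_square algebra_simps)
    also have "\<dots> = a + 2*t*b + t^2 * c"
      using sym_dot[OF sy, of v y] by (simp add: b_def)
    finally show ?thesis .
  qed
  have c0: "0 \<le> c" using assms psd_def c_def by blast
  show ?thesis
  proof (cases "c = 0")
    case True
    have "b = 0"
    proof (rule ccontr)
      assume "b \<noteq> 0"
      have "0 \<le> a + 2*(-(a+1)/(2*b))*b" using q[of "-(a+1)/(2*b)"] True by simp
      also have "\<dots> = -1" using \<open>b \<noteq> 0\<close> by (simp add: field_simps)
      finally show False by simp
    qed
    then show ?thesis using True by (simp add: b_def c_def)
  next
    case False
    then have cp: "c > 0" using c0 by simp
    have "0 \<le> a + 2*(-b/c)*b + (-b/c)^2 * c" using q by blast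
    also have "\<dots> = a - b^2/c" using cp by (simp add: field_simps power2_eq_square)
    finally have "b^2 / c \<le> a" by simp
    then have "b^2 \<le> a * c" using cp by (simp add: divide_le_eq)
    then show ?thesis by (simp add: a_def b_def c_def)
  qed
qed

lemma psd_sub_outer:
  fixes X :: "real^'n^'n"
  assumes "psd X" "x = X *v y" "0 \<le> e" "e * (y \<bullet> (X *v y)) \<le> 1"
  shows "psd (X - e *\<^sub>R outer x)"
proof -
  have sy: "sym_mat X" using assms psd_def by blast
  have "0 \<le> v \<bullet> ((X - e *\<^sub>R outer x) *v v)" for v
  proof -
    have xv: "x \<bullet> v = y \<bullet> (X *v v)" using assms(2) sym_dot[OF sy, of v y] by (simp add: inner_commute)
    have c: "(x \<bullet> v)^2 \<le> (y \<bullet> (X *v y)) * (v \<bullet> (X *v v))" using psd_cs[OF assms(1)] xv by simp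
    have a0: "0 \<le> y \<bullet> (X *v y)" "0 \<le> v \<bullet> (X *v v)" using assms(1) psd_def by blast+
    have "e * (x \<bullet> v)^2 \<le> e * ((y \<bullet> (X *v y)) * (v \<bullet> (X *v v)))"
      using c assms(3) by (rule mult_left_mono[OF _ ]) 
    also have "\<dots> = (e * (y \<bullet> (X *v y))) * (v \<bullet> (X *v v))" by simp
    also have "\<dots> \<le> 1 * (v \<bullet> (X *v v))"
      using assms(4) a0 by (intro mult_right_mono) auto
    finally have "e * (x \<bullet> v)^2 \<le> v \<bullet> (X *v v)" by simp
    then show ?thesis
      by (simp add: matrix_vector_mult_diff_rdistrib inner_diff_right
          scaleR_matrix_vector_assoc[symmetric] quad_outer)
  qed
  then show ?thesis using sy sym_diff sym_scale sym_outer psd_def by metis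
qed

lemma axis_dot: "axis i (1::real) \<bullet> (X *v axis j 1) = X$i$j"
  by (simp add: inner_commute[of "axis i 1"] inner_axis matrix_vector_mult_basis column_def)

lemma psd_diag: "psd X \<Longrightarrow> 0 \<le> X$i$i"
  using axis_dot[of i X i] psd_def by metis

lemma psd_off: "psd X \<Longrightarrow> (X$i$j)^2 \<le> X$i$i * X$j$j"
  using psd_cs[of X "axis i 1" "axis j 1"] axis_dot by metis

lemma psd_trace_nonneg: "psd X \<Longrightarrow> 0 \<le> trace X"
  by (simp add: trace_eq sum_nonneg psd_diag)

lemma psd_trace_zero: assumes "psd X" "trace X = 0" shows "X = 0"
proof -
  have d: "X$i$i = 0" for i using assms sum_nonneg_eq_0_iff[of UNIV "\<lambda>i. X$i$i"]
    by (simp add: trace_eq psd_diag)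
  have "X$i$j = 0" for i j using psd_off[OF assms(1), of i j] d by simp
  then show ?thesis by (simp add: vec_eq_iff)
qed

lemma psd_bound: assumes "psd X" "trace X = 1" shows "\<bar>X$i$j\<bar> \<le> 1"
proof -
  have d: "X$k$k \<le> 1" for k
    using member_le_sum[of k UNIV "\<lambda>i. X$i$i"] assms by (simp add: trace_eq psd_diag)
  have "(X$i$j)^2 \<le> 1"
    using psd_off[OF assms(1), of i j] d[of i] d[of j] psd_diag[OF assms(1), of i] psd_diag[OF assms(1), of j]
    by (meson mult_le_one order_trans)
  then show ?thesis by (simp add: abs_square_le_1)
qed

lemma frob_add: "frob M (A + B) = frob M A + frob M B"
  using linear_frob linear_add by blast
lemma frob_diff: "frob M (A - B) = frob M A - frob M B"
  using linear_frob linear_diff by blast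
lemma frob_scale: "frob M (c *\<^sub>R A) = c * frob M A"
  using linear_frob linear_scale by fastforce
lemma frob_sum: "frob M (sum f T) = (\<Sum>v\<in>T. frob M (f v))"
  using linear_frob linear_sum by blast
lemma trace_scale: "trace (c *\<^sub>R (A::real^'n^'n)) = c * trace A"
  using linear_trace linear_scale by fastforce
lemma trace_add': "trace ((A::real^'n^'n) + B) = trace A + trace B"
  using linear_trace linear_add by blast
lemma trace_diff': "trace ((A::real^'n^'n) - B) = trace A - trace B"
  using linear_trace linear_diff by blast

lemma SM_add: "A \<in> SM \<M> \<Longrightarrow> B \<in> SM \<M> \<Longrightarrow> A + B \<in> SM \<M>"
  unfolding SM_def by (auto simp: psd_add frob_add)

lemma SM_scale: "A \<in> SM \<M> \<Longrightarrow> 0 \<le> c \<Longrightarrow> c *\<^sub>R A \<in> SM \<M>"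
  unfolding SM_def by (auto simp: psd_scale frob_scale)

lemma SM_zero: "0 \<in> SM \<M>"
  unfolding SM_def by (simp add: psd_zero frob_eq)

lemma SM_psd: "A \<in> SM \<M> \<Longrightarrow> psd A"
  unfolding SM_def by simp

lemma convex_SM: "convex (SM \<M>)"
  unfolding convex_def by (intro allI impI ballI SM_add SM_scale) auto

lemma conic_SM: "conic (SM \<M>)"
  unfolding conic_def using SM_scale by blast

lemma convex_cone_SM: "convex_cone (SM \<M>)"
  unfolding convex_cone_def using convex_SM conic_SM SM_zero by blast

lemma cont_lin: "linear (f :: real^'n^'n \<Rightarrow> real) \<Longrightarrow> continuous_on UNIV f"
  using linear_continuous_on linear_conv_bounded_linear by blast

lemma linear_entry: "linear (\<lambda>X::real^'n^'n. X$i$j)"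
  by (rule linearI) simp_all

lemma closed_SM: "closed (SM \<M>)"
proof -
  have "SM \<M> = (\<Inter>i. \<Inter>j. {X. X$i$j = X$j$i}) \<inter> (\<Inter>v. {X. 0 \<le> v \<bullet> (X *v v)})
     \<inter> (\<Inter>M\<in>\<M>. {X. 0 \<le> frob M X})"
    unfolding SM_def psd_def sym_mat_def by (auto simp: vec_eq_iff transpose_def)
  moreover have "closed \<dots>"
    by (intro closed_Int closed_INT ballI closed_Collect_eq closed_Collect_le cont_lin linear_entry
        linear_quad linear_frob continuous_on_const)
  ultimately show ?thesis by simp
qed

lemma range_subspace: "subspace (range (\<lambda>y. (X::real^'n^'n) *v y))"
  unfolding subspace_def
  by (metis (no_types, lifting) matrix_vector_mult_0_right matrix_vector_right_distrib
      matrix_vector_mult_scaleR rangeE rangeI)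

lemma quad_zero_sum:
  assumes "finite T" "\<forall>v\<in>T. 0 \<le> u v" "\<forall>v\<in>T. psd v" "w \<in> T"
    "z \<bullet> ((\<Sum>v\<in>T. u v *\<^sub>R v) *v z) = 0"
  shows "u w * (z \<bullet> (w *v z)) = 0"
proof -
  have "z \<bullet> ((\<Sum>v\<in>T. u v *\<^sub>R v) *v z) = (\<Sum>v\<in>T. u v * (z \<bullet> (v *v z)))"
    by (simp only: linear_sum[OF linear_quad[of z z]] linear_scale[OF linear_quad[of z z]] real_scaleR_def)
  moreover have "\<forall>v\<in>T. 0 \<le> u v * (z \<bullet> (v *v z))" using assms unfolding psd_def by (meson mult_nonneg_nonneg)
  ultimately show ?thesis using assms sum_nonneg_eq_0_iff[of T "\<lambda>v. u v * (z \<bullet> (v *v z))"]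
    by auto
qed

lemma forward:
  fixes \<M> :: "(real^'n^'n) set"
  assumes rog: "ROG (SM \<M>)" and X: "X \<in> SM \<M>" "X \<noteq> 0"
  shows "range (\<lambda>y. X *v y) \<inter> EM X \<M> \<noteq> {0}"
proof -
  have "X \<in> convex hull (SM \<M> \<inter> {outer x | x. True})" using rog X unfolding ROG_def by blast
  then obtain T u where T: "finite T" "T \<subseteq> SM \<M> \<inter> {outer x | x. True}" "\<forall>v\<in>T. 0 \<le> u v"
    "sum u T = 1" "(\<Sum>v\<in>T. u v *\<^sub>R v) = X"
    unfolding convex_hull_explicit by blast
  obtain w where w: "w \<in> T" "u w *\<^sub>R w \<noteq> 0"
  proof (rule ccontr)
    assume "\<not> thesis"
    then have "\<forall>w\<in>T. u w *\<^sub>R w = 0" using that by blast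
    then have "(\<Sum>v\<in>T. u v *\<^sub>R v) = 0" by (intro sum.neutral) blast
    then show False using T X by simp
  qed
  obtain z where z: "w = outer z" using w T by blast
  have uw: "u w > 0" using w T by (metis less_eq_real_def scale_zero_left)
  define x where "x = sqrt (u w) *\<^sub>R z"
  have ox: "outer x = u w *\<^sub>R w" using uw by (simp add: x_def outer_scale z)
  have x0: "x \<noteq> 0"
  proof
    assume "x = 0"
    then have "outer x = 0" by (simp add: outer_def vec_eq_iff)
    then show False using ox w by simp
  qed
  have wS: "w \<in> SM \<M>" using w T by blast
  have psdT: "\<forall>v\<in>T. psd v" using T SM_psd by blast
  have xE: "x \<in> EM X \<M>"
    unfolding EM_def
  proof (intro CollectI ballI)
    fix M assume M: "M \<in> \<M>"
    have f0: "\<forall>v\<in>T. 0 \<le> u v * frob M v" using T M unfolding SM_def by (auto intro: mult_nonneg_nonneg)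
    have "x \<bullet> (M *v x) = u w * frob M w" by (simp add: frob_outer[symmetric] ox frob_scale)
    moreover have "0 \<le> frob M w" using wS M unfolding SM_def by blast
    moreover have "u w * frob M w \<le> (\<Sum>v\<in>T. u v * frob M v)"
      using member_le_sum[of w T "\<lambda>v. u v * frob M v"] f0 w T by blast
    moreover have "frob M X = (\<Sum>v\<in>T. u v * frob M v)"
      using T(5) by (auto simp: frob_sum frob_scale)
    ultimately show "\<bar>x \<bullet> (M *v x)\<bar> \<le> frob M X" using uw by simp
  qed
  obtain y k where y: "y \<in> span (range (\<lambda>y. X *v y))"
    and k: "\<And>v. v \<in> span (range (\<lambda>y. X *v y)) \<Longrightarrow> orthogonal k v" and xyk: "x = y + k"
    using orthogonal_subspace_decomp_exists by blast
  have yR: "y \<in> range (\<lambda>y. X *v y)" using y range_subspace span_eq_iff by blast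
  have "orthogonal k (X *v k)" using k span_base by blast
  then have "k \<bullet> ((\<Sum>v\<in>T. u v *\<^sub>R v) *v k) = 0" using T(5) by (simp add: orthogonal_def)
  then have "u w * (k \<bullet> (w *v k)) = 0" using quad_zero_sum[OF T(1) T(3) psdT w(1)] by blast
  then have "(x \<bullet> k)^2 = 0" using quad_outer[of k x] ox scaleR_matrix_vector_assoc[symmetric]
    by (metis inner_scaleR_right)
  then have xk: "k \<bullet> x = 0" by (simp add: inner_commute)
  have "k \<bullet> y = 0" using k[OF y] by (simp add: orthogonal_def)
  then have "k \<bullet> k = 0" using xk xyk by (simp add: inner_add_right)
  then have "x \<in> range (\<lambda>y. X *v y)" using xyk yR by simp
  then show ?thesis using xE x0 by blast
qed

lemma extreme_rank_one:
  fixes \<M> :: "(real^'n^'n) set"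
  assumes cond: "\<forall>X\<in>SM \<M>. X \<noteq> 0 \<longrightarrow> range (\<lambda>y. X *v y) \<inter> EM X \<M> \<noteq> {0}"
    and ext: "X extreme_point_of (SM \<M> \<inter> {X. trace X = 1})"
  shows "X \<in> SM \<M> \<inter> {outer x | x. True}"
proof -
  let ?B = "SM \<M> \<inter> {X. trace X = 1}"
  have XB0: "X \<in> ?B" using ext unfolding extreme_point_of_def by (rule conjunct1)
  have XB: "X \<in> SM \<M>" "trace X = 1" using XB0 by simp_all
  have pX: "psd X" using XB SM_psd by blast
  have "X \<noteq> 0"
  proof
    assume "X = 0"
    then have "trace X = 0" by (simp add: trace_def)
    then show False using XB by simp
  qed
  then have "range (\<lambda>y. X *v y) \<inter> EM X \<M> \<noteq> {0}" using cond XB(1) by simp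
  moreover have "0 \<in> range (\<lambda>y. X *v y) \<inter> EM X \<M>"
  proof
    show "0 \<in> range (\<lambda>y. X *v y)" by (metis matrix_vector_mult_0_right rangeI)
    show "0 \<in> EM X \<M>" using XB(1) unfolding EM_def SM_def by simp
  qed
  ultimately obtain x where x0: "x \<in> range (\<lambda>y. X *v y) \<inter> EM X \<M>" "x \<noteq> 0" by blast
  then have x: "x \<in> range (\<lambda>y. X *v y)" "x \<in> EM X \<M>" "x \<noteq> 0" by simp_all
  obtain y where xy: "x = X *v y" using x(1) by (rule rangeE)
  define a where "a = y \<bullet> (X *v y)"
  define q where "q = x \<bullet> x"
  have a0: "0 \<le> a" using pX psd_def a_def by blast
  have q0: "0 < q" using x(3) q_def by simp
  define e where "e = 1 / ((a + 1) * (q + 1))"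
  have e0: "0 < e" using a0 q0 by (simp add: e_def)
  have ea: "e * a \<le> 1"
  proof -
    have pos: "0 < (a+1)*(q+1)" using a0 q0 by simp
    have "0 \<le> a * q" using a0 q0 by simp
    then have "a \<le> (a+1)*(q+1)" using q0 by (simp add: algebra_simps)
    then have "a / ((a+1)*(q+1)) \<le> 1" using pos by (simp add: divide_le_eq)
    then show ?thesis by (simp add: e_def)
  qed
  have eq1: "e * (q + 1) \<le> 1"
  proof -
    have pos: "0 < (a+1)*(q+1)" using a0 q0 by simp
    have "q + 1 \<le> (a+1)*(q+1)" using a0 q0 by (simp add: algebra_simps)
    then have "(q+1) / ((a+1)*(q+1)) \<le> 1" using pos a0 by (simp add: divide_le_eq)
    then show ?thesis by (simp add: e_def)
  qed
  define D where "D = e *\<^sub>R (outer x - q *\<^sub>R X)"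
  have Pe: "X + D = (1 - e*q) *\<^sub>R X + e *\<^sub>R outer x" by (simp add: D_def algebra_simps)
  have Ne: "X - D = (e*q) *\<^sub>R X + (X - e *\<^sub>R outer x)" by (simp add: D_def algebra_simps)
  have psdP: "psd (X + D)" unfolding Pe using eq1 e0 q0
  proof -
    have "e * q \<le> 1" using eq1 e0 by (simp add: algebra_simps)
    then show "psd ((1 - e*q) *\<^sub>R X + e *\<^sub>R outer x)"
      using psd_add[OF psd_scale[OF pX] psd_scale[OF psd_outer]] e0 by simp
  qed
  have psdN: "psd (X - D)" unfolding Ne using e0 q0 ea
    using psd_add[OF psd_scale[OF pX] psd_sub_outer[OF pX xy]] e0 q0 ea unfolding a_def by simp
  have trD: "trace D = 0"
    by (simp add: D_def trace_scale trace_diff' trace_outer XB q_def)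
  have fP: "0 \<le> frob M (X + D)" and fN: "0 \<le> frob M (X - D)" if M: "M \<in> \<M>" for M
  proof -
    have b: "\<bar>frob M (outer x)\<bar> \<le> frob M X" using x(2) M unfolding EM_def by (simp add: frob_outer)
    have b1: "- frob M X \<le> frob M (outer x)" "frob M (outer x) \<le> frob M X" using b by linarith+
    have fx: "0 \<le> frob M X" using XB M unfolding SM_def by blast
    have m1: "e * (- frob M X) \<le> e * frob M (outer x)" using b1(1) e0 by (intro mult_left_mono) auto
    have m2: "e * frob M (outer x) \<le> e * frob M X" using b1(2) e0 by (intro mult_left_mono) auto
    have m3: "(e * (q + 1)) * frob M X \<le> frob M X" using eq1 fx e0 q0
      by (intro mult_left_le_one_le) auto
    have m4: "0 \<le> (e * q) * frob M X" using e0 q0 fx by simp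
    have "frob M (X + D) = (1 - e*q) * frob M X + e * frob M (outer x)"
      unfolding Pe by (simp add: frob_add frob_scale)
    then show "0 \<le> frob M (X + D)" using m1 m3 by (simp add: algebra_simps)
    have "frob M (X - D) = (1 + e*q) * frob M X - e * frob M (outer x)"
      unfolding D_def by (simp add: frob_add frob_scale frob_diff algebra_simps)
    then show "0 \<le> frob M (X - D)" using m2 m3 m4 by (simp add: algebra_simps)
  qed
  have PB: "X + D \<in> ?B" using psdP fP trD XB by (simp add: SM_def trace_add')
  have NB: "X - D \<in> ?B" using psdN fN trD XB by (simp add: SM_def trace_diff')
  have m2: "(X + D) + (X - D) = (2::real) *\<^sub>R X" by (simp only: scaleR_2) simp
  have mid: "midpoint (X + D) (X - D) = X" unfolding midpoint_def m2 by simp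
  have "D = 0"
  proof (rule ccontr)
    assume "D \<noteq> 0"
    have "X + D \<noteq> X - D"
    proof
      assume h: "X + D = X - D"
      have "(2::real) *\<^sub>R D = (X + D) - (X - D)" by (simp only: scaleR_2) simp
      then have "(2::real) *\<^sub>R D = 0" using h by simp
      then show False using \<open>D \<noteq> 0\<close> by simp
    qed
    then have "X \<in> open_segment (X + D) (X - D)" using midpoint_in_open_segment[of "X+D" "X-D"] mid by simp
    moreover have "\<forall>a\<in>?B. \<forall>b\<in>?B. X \<notin> open_segment a b" using ext unfolding extreme_point_of_def by (rule conjunct2)
    ultimately show False using PB NB by blast
  qed
  then have "outer x - q *\<^sub>R X = 0" using e0 unfolding D_def by simp
  then have ox: "outer x = q *\<^sub>R X" by simp
  have "outer ((1 / sqrt q) *\<^sub>R x) = (1 / sqrt q)^2 *\<^sub>R outer x" by (rule outer_scale)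
  also have "(1 / sqrt q)^2 = 1 / q" using q0 by (simp add: power_divide)
  finally have "X = outer ((1 / sqrt q) *\<^sub>R x)" using q0 ox by simp
  then show ?thesis using XB by blast
qed

lemma backward:
  fixes \<M> :: "(real^'n^'n) set"
  assumes cond: "\<forall>X\<in>SM \<M>. X \<noteq> 0 \<longrightarrow> range (\<lambda>y. X *v y) \<inter> EM X \<M> \<noteq> {0}"
  shows "ROG (SM \<M>)"
proof -
  let ?O = "{outer x | x::real^'n. True}"
  let ?A = "SM \<M> \<inter> ?O"
  let ?B = "SM \<M> \<inter> {X. trace X = 1}"
  have clB: "closed ?B"
    by (intro closed_Int closed_SM closed_Collect_eq cont_lin linear_trace continuous_on_const)
  have bdB: "bounded ?B"
    unfolding bounded_iff
  proof (intro exI ballI)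
    fix X assume X: "X \<in> ?B"
    have b: "\<bar>X$i$j\<bar> \<le> 1" for i j using X psd_bound SM_psd by blast
    have "norm X \<le> (\<Sum>i\<in>UNIV. norm (X$i))"
      unfolding norm_vec_def by (rule L2_set_le_sum) simp
    also have "\<dots> \<le> (\<Sum>i\<in>UNIV. \<Sum>j\<in>UNIV. \<bar>X$i$j\<bar>)"
      by (intro sum_mono norm_le_l1_cart)
    also have "\<dots> \<le> (\<Sum>i\<in>(UNIV::'n set). \<Sum>j\<in>(UNIV::'n set). 1)"
      by (intro sum_mono b)
    finally show "norm X \<le> real CARD('n) * real CARD('n)" by simp
  qed
  have cvB: "convex ?B"
  proof (rule convex_Int[OF convex_SM])
    show "convex {X::real^'n^'n. trace X = 1}"
      unfolding convex_def by (simp add: trace_add' trace_scale)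
  qed
  have KM: "?B = convex hull {x. x extreme_point_of ?B}"
  proof -
    have cpB: "compact ?B" using clB bdB by (simp add: compact_eq_bounded_closed)
    show ?thesis by (rule Krein_Milman_Minkowski[OF cpB cvB])
  qed
  have extA: "{x. x extreme_point_of ?B} \<subseteq> ?A"
  proof
    fix Y assume "Y \<in> {x. x extreme_point_of ?B}"
    then have "Y extreme_point_of ?B" by simp
    then show "Y \<in> ?A" by (rule extreme_rank_one[OF cond])
  qed
  have H: "convex hull {x. x extreme_point_of ?B} \<subseteq> convex hull ?A" by (rule hull_mono[OF extA])
  have BA: "?B \<subseteq> convex hull ?A"
    apply (subst KM) by (rule H)
  have scA: "(\<lambda>x. t *\<^sub>R x) ` ?A \<subseteq> ?A" if t: "0 \<le> t" for t
  proof
    fix Y assume "Y \<in> (\<lambda>x. t *\<^sub>R x) ` ?A"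
    then obtain W where W: "W \<in> ?A" "Y = t *\<^sub>R W" by (rule imageE)
    then obtain z where Y: "Y = t *\<^sub>R outer z" "outer z \<in> SM \<M>" by blast
    have "outer (sqrt t *\<^sub>R z) = t *\<^sub>R outer z" using t by (simp add: outer_scale)
    then have "Y = outer (sqrt t *\<^sub>R z)" using Y by simp
    then have "Y \<in> ?O" by blast
    moreover have "Y \<in> SM \<M>" using Y SM_scale t by simp
    ultimately show "Y \<in> ?A" by blast
  qed
  have sub: "SM \<M> \<subseteq> convex hull ?A"
  proof
    fix X assume X: "X \<in> SM \<M>"
    define t where "t = trace X"
    have pX: "psd X" using X by (rule SM_psd)
    have t0: "0 \<le> t" unfolding t_def using pX by (rule psd_trace_nonneg)
    show "X \<in> convex hull ?A"
    proof (cases "t = 0")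
      case True
      then have "X = 0" using psd_trace_zero[OF pX] t_def by simp
      moreover have "outer 0 = (0::real^'n^'n)" by (simp add: outer_def vec_eq_iff)
      ultimately have "X = outer 0" by simp
      then have "X \<in> ?O" by blast
      then have "X \<in> ?A" using X by (rule IntI[rotated])
      then show ?thesis by (rule hull_inc)
    next
      case False
      then have tp: "0 < t" using t0 by simp
      have "(1/t) *\<^sub>R X \<in> SM \<M>" using X tp by (intro SM_scale) simp_all
      moreover have "trace ((1/t) *\<^sub>R X) = 1" using tp by (simp add: trace_scale t_def[symmetric])
      ultimately have "(1/t) *\<^sub>R X \<in> ?B" by simp
      then have "(1/t) *\<^sub>R X \<in> convex hull ?A" using BA by (rule subsetD[rotated])
      then have "t *\<^sub>R ((1/t) *\<^sub>R X) \<in> (\<lambda>x. t *\<^sub>R x) ` (convex hull ?A)" by (rule imageI)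
      moreover have "t *\<^sub>R ((1/t) *\<^sub>R X) = X" using tp by simp
      ultimately have "X \<in> (\<lambda>x. t *\<^sub>R x) ` (convex hull ?A)" by simp
      then have "X \<in> convex hull ((\<lambda>x. t *\<^sub>R x) ` ?A)" by (simp only: convex_hull_scaling)
      then show ?thesis using hull_mono[OF scA[OF t0]] by (rule subsetD[rotated])
    qed
  qed
  have sup: "convex hull ?A \<subseteq> SM \<M>"
    by (rule hull_minimal) (auto simp: convex_SM)
  have eq: "SM \<M> = convex hull ?A" using sub sup by (rule subset_antisym)
  have ps: "SM \<M> \<subseteq> Collect psd" using SM_psd by blast
  show ?thesis unfolding ROG_def
    using closed_SM convex_cone_SM ps eq by (intro conjI)
qed

theorem lemma2p23:
  fixes \<M> :: "(real^'n^'n) set"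
  assumes "\<forall>M\<in>\<M>. sym_mat M"
  shows "ROG (SM \<M>) \<longleftrightarrow>
    (\<forall>X\<in>SM \<M>. X \<noteq> 0 \<longrightarrow> range (\<lambda>y. X *v y) \<inter> EM X \<M> \<noteq> {0})"
proof
  assume "ROG (SM \<M>)"
  then show "\<forall>X\<in>SM \<M>. X \<noteq> 0 \<longrightarrow> range (\<lambda>y. X *v y) \<inter> EM X \<M> \<noteq> {0}"
    by (intro ballI impI forward)
next
  assume "\<forall>X\<in>SM \<M>. X \<noteq> 0 \<longrightarrow> range (\<lambda>y. X *v y) \<inter> EM X \<M> \<noteq> {0}"
  then show "ROG (SM \<M>)" by (rule backward)
qed
end
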